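(* Let $w$ be an ESG world and $w_t$ the corresponding time-extended t-ESG world. Let $\alpha$ be a sentence of ESG. Then for every finite timed trace $z_t$ and the untimed trace $z=\mathrm{sym}(z_t)$: $$w,z\models_{\mathrm{ESG}}\alpha \iff w_t,z_t\models_{\text{t-ESG}}\alpha .$$
   Context: The logic t-ESG. Sorts object, action, clock, time; standard names $\mathcal N_O,\mathcal N_A,\mathcal N_C$ (countably infinite) and time names $\mathbb Q_{\ge0}$; variables of sorts object, action, clock; fluent and rigid function and predicate symbols (action- and clock-valued functions rigid); distinguished fluent predicates $\mathit{Poss}$, $\mathit{reset}$, $g$. Terms built from variables, names and function symbols; primitive terms/formulas are symbols applied to names. Situation formulas: $P(\vec t)$, $t_1=t_2$, $c\bowtie r$ ($c$ clock term), $r\bowtie r'$ ($r,r'\in\mathbb Q_{\ge0}$, $\bowtie\in\{<,\le,=,\ge,>\}$), closed under $\wedge,\neg,\forall$, $\square\alpha$, $[\delta]\alpha$, $[\![\delta]\!]\phi$, $[\![\delta]\!]^{<\infty}\phi$; trace formulas: situation formulas closed under $\wedge,\neg,\forall$, $\phi\,\mathcal U_I\,\psi$ ($I$ interval with natural/$\infty$ endpoints). Programs $\delta::=t\mid\alpha?\mid\delta_1;\delta_2\mid\delta_1|\delta_2\mid\delta_1\|\delta_2\mid\delta^*$ ($t$ action term, $\alpha$ static: no $[\cdot],[\![\cdot]\!],\square$). Timed traces $t_1p_1t_2p_2\cdots$ with non-decreasing $t_i\in\mathbb R_{\ge0}$, $p_i\in\mathcal N_A$; $\mathcal Z$ finite,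 $\mathcal T$ all; $(p_1,t_1)\cdots(p_k,t_k)$ denotes $t_1p_1\cdots t_kp_k$; $\mathrm{time}(z)$ = time of last action ($0$ for $\langle\rangle$). A t-ESG world maps (primitive term, finite trace) to a name of the right sort, (primitive formula, finite trace) to $\{0,1\}$, (clock name, finite trace) to $\mathbb R_{\ge0}$, with rigidity, unique names for actions and clocks, $w[c,\langle\rangle]=0$, $w[c,z\cdot t]=w[c,z]+t-\mathrm{time}(z)$, $w[c,z\cdot p]=0$ if $w[\mathit{reset}(c),z\cdot p]=1$ else $w[c,z]$. Denotation $|f(\vec t)|^z_w=w[f(|\vec t|^z_w),z]$. Transitions given $w$: a time step $\langle z,\delta\rangle\to\langle z\cdot t,\delta\rangle$ with $t\ge\mathrm{time}(z)$ followed by an action step $\to_s$, the least relation with $\langle z,a\rangle\to_s\langle z\cdot|a|^z_w,\top?\rangle$; $\langle z,\delta_1;\delta_2\rangle\to_s\langle zp,\gamma;\delta_2\rangle$ if $\langle z,\delta_1\rangle\to_s\langle zp,\gamma\rangle$; $\langle z,\delta_1;\delta_2\rangle\to_s\langle zp,\delta'\rangle$ if $\langle z,\delta_1\rangle$ final and $\langle z,\delta_2\rangle\to_s\langle zp,\delta'\rangle$; $|$: either branch; $\langle z,\delta^*\rangle\to_s\langle zp,\gamma;\delta^*\rangle$ if $\langle z,\delta\rangle\to_s\langle zp,\gamma\rangle$; $\|$: either component steps, other unchanged. Final: $\langle z,\alpha?\rangle$ iff $w,z\models\alpha$; $;$,$\|$ both final; $|$ one final; $\delta^*$ always. $\|\delta\|^z_w$: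 finite $z'$ with $\langle z,\delta\rangle\to^*\langle zz',\delta'\rangle$ final, and infinite traces realized by an infinite transition sequence never visiting a final configuration. Truth: $F(\vec t)$ via $w[F(\vec n),z]$; equality of denotations; $c\bowtie r$ iff $w[c,z]\bowtie r$; usual connectives; $\forall$ substitutional over names; $\square\alpha$: all finite extensions; $[\delta]\alpha$: all finite $z'\in\|\delta\|^z_w$ give $w,zz'\models\alpha$; $[\![\delta]\!]\phi$: $w,z,\tau\models\phi$ for all $\tau\in\|\delta\|^z_w$; $[\![\delta]\!]^{<\infty}$: finite ones. $w,z,\tau\models\alpha$ iff $w,z\models\alpha$ for situation formulas; $w,z,\tau\models\phi\,\mathcal U_I\,\psi$ iff $\tau=z_1\tau'$, $z_1=(p_1,t_1)\cdots(p_k,t_k)$ nonempty, $w,zz_1,\tau'\models\psi$, $\mathrm{time}(z_1)\in\mathrm{time}(z)+I$, and $w,zz_2,z_3\tau'\models\phi$ for all splits $z_1=z_2z_3$ into nonempty time–action sequences. The logic ESG. Its language: t-ESG formulas mentioning only object and action terms, no clock terms, not mentioning $g$ or $\mathit{reset}$, and using $\mathcal U_I$ only with $I=[0,\infty)$ (written $\mathcal U$). ESG traces are finite or infinite sequences $p_1p_2\cdots$ of action names. An ESG world maps (primitive object/action term, finite ESG trace) to names and (primitive formula, finite ESG trace) to $\{0,1\}$, with rigidity and unique names for actions. ESG transitions are just the action steps above (no time steps), final configurations and program traces are defined analogously, and truth $\models_{\mathrm{ESG}}$ is defined by the same clauses (without clocks), with $w,z,\tau\models\phi\,\mathcal U\,\psi$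 iff $\tau=z_1\tau'$ for nonempty $z_1$, $w,zz_1,\tau'\models\psi$ and $w,zz_2,z_3\tau'\models\phi$ for all splits $z_1=z_2z_3$ with $z_2,z_3$ nonempty. Symbolic trace: $\mathrm{sym}((p_1,t_1)\cdots(p_n,t_n))=p_1\cdots p_n$ (time points omitted). Time-extended world: for an ESG world $w$, $w_t$ is the t-ESG world with $w_t[P(\vec n),z_t]=w[P(\vec n),\mathrm{sym}(z_t)]$ for every primitive formula, $w_t[f(\vec n),z_t]=w[f(\vec n),\mathrm{sym}(z_t)]$ for every primitive term, and clock values chosen in any way satisfying the t-ESG world constraints. *)

theory Defs
  imports Complex_Main
begin

section \<open>Syntax shared by ESG and t-ESG\<close>

datatype srt = SObj | SAct | SClk

datatype nm = NObj nat | NAct nat | NClk nat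

fun nsort :: "nm \<Rightarrow> srt" where
  "nsort (NObj _) = SObj" | "nsort (NAct _) = SAct" | "nsort (NClk _) = SClk"

datatype var = V srt nat

fun vsort :: "var \<Rightarrow> srt" where "vsort (V s _) = s"

text \<open>Function symbols: index, result sort, declared-rigid flag.
  Action- and clock-valued function symbols are always rigid.\<close>
datatype fsym = FS nat srt bool

fun fres :: "fsym \<Rightarrow> srt" where "fres (FS _ s _) = s"
fun frigid :: "fsym \<Rightarrow> bool" where "frigid (FS _ s r) = (r \<or> s \<noteq> SObj)"

text \<open>Predicate symbols: the distinguished fluents Poss, reset, g, and others (index, rigid flag).\<close>
datatype psym = Poss | Reset | Gd | PS nat bool

fun prigid :: "psym \<Rightarrow> bool" where
  "prigid (PS _ r) = r" | "prigid _ = False"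

datatype trm = TV var | TN nm | TF fsym "trm list"

fun tsort :: "trm \<Rightarrow> srt" where
  "tsort (TV v) = vsort v" | "tsort (TN n) = nsort n" | "tsort (TF f _) = fres f"

datatype cmp = CLt | CLe | CEq | CGe | CGt

fun cmpr :: "cmp \<Rightarrow> 'a::linorder \<Rightarrow> 'a \<Rightarrow> bool" where
  "cmpr CLt x y = (x < y)" | "cmpr CLe x y = (x \<le> y)" | "cmpr CEq x y = (x = y)"
| "cmpr CGe x y = (x \<ge> y)" | "cmpr CGt x y = (x > y)"

text \<open>Intervals with natural / infinite endpoints:
  lower bound, lower-closed flag, upper bound (None = \<infinity>), upper-closed flag.\<close>
datatype intv = Intv nat bool "nat option" bool

fun inI :: "real \<Rightarrow> intv \<Rightarrow> bool" where
  "inI d (Intv a ac b bc) =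
     ((if ac then real a \<le> d else real a < d) \<and>
      (case b of None \<Rightarrow> True | Some u \<Rightarrow> (if bc then d \<le> real u else d < real u)))"

datatype fml =
    FPred psym "trm list"
  | FEq trm trm
  | FCmpC trm cmp rat
  | FCmpR rat cmp rat
  | FAnd fml fml
  | FNot fml
  | FAll var fml
  | FBox fml
  | FAfter prog fml
  | FEvery prog fml            \<comment> \<open>[[\<delta>]]\<phi>\<close>
  | FEveryFin prog fml         \<comment> \<open>[[\<delta>]]^{<\<infinity>}\<phi>\<close>
  | FUntil fml intv fml
and prog =
    PAct trm
  | PTest fml
  | PSeq prog prog
  | PAlt prog prog
  | PPar prog prog
  | PStar prog

definition ttrue :: fml where "ttrue = FEq (TN (NObj 0)) (TN (NObj 0))"

fun static_wf :: "fml \<Rightarrow> bool" where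
  "static_wf (FPred p ts) = True"
| "static_wf (FEq t1 t2) = True"
| "static_wf (FCmpC c op r) = (tsort c = SClk \<and> r \<ge> 0)"
| "static_wf (FCmpR r op r') = (r \<ge> 0 \<and> r' \<ge> 0)"
| "static_wf (FAnd a b) = (static_wf a \<and> static_wf b)"
| "static_wf (FNot a) = static_wf a"
| "static_wf (FAll v a) = static_wf a"
| "static_wf _ = False"

fun wfp :: "prog \<Rightarrow> bool" where
  "wfp (PAct t) = (tsort t = SAct)"
| "wfp (PTest a) = static_wf a"
| "wfp (PSeq d1 d2) = (wfp d1 \<and> wfp d2)"
| "wfp (PAlt d1 d2) = (wfp d1 \<and> wfp d2)"
| "wfp (PPar d1 d2) = (wfp d1 \<and> wfp d2)"
| "wfp (PStar d) = wfp d"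

text \<open>\<open>wfk False\<close>: situation formula; \<open>wfk True\<close>: trace formula.\<close>
fun wfk :: "bool \<Rightarrow> fml \<Rightarrow> bool" where
  "wfk b (FPred p ts) = True"
| "wfk b (FEq t1 t2) = True"
| "wfk b (FCmpC c op r) = (tsort c = SClk \<and> r \<ge> 0)"
| "wfk b (FCmpR r op r') = (r \<ge> 0 \<and> r' \<ge> 0)"
| "wfk b (FAnd x y) = (wfk b x \<and> wfk b y)"
| "wfk b (FNot x) = wfk b x"
| "wfk b (FAll v x) = wfk b x"
| "wfk b (FBox x) = wfk False x"
| "wfk b (FAfter d x) = (wfp d \<and> wfk False x)"
| "wfk b (FEvery d x) = (wfp d \<and> wfk True x)"
| "wfk b (FEveryFin d x) = (wfp d \<and> wfk True x)"
| "wfk b (FUntil x I y) = (b \<and> wfk True x \<and> wfk True y)"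

fun fvt :: "trm \<Rightarrow> var set" where
  "fvt (TV v) = {v}" | "fvt (TN n) = {}" | "fvt (TF f ts) = \<Union> (set (map fvt ts))"

fun fvf :: "fml \<Rightarrow> var set" and fvp :: "prog \<Rightarrow> var set" where
  "fvf (FPred p ts) = \<Union> (set (map fvt ts))"
| "fvf (FEq t1 t2) = fvt t1 \<union> fvt t2"
| "fvf (FCmpC c op r) = fvt c"
| "fvf (FCmpR r op r') = {}"
| "fvf (FAnd x y) = fvf x \<union> fvf y"
| "fvf (FNot x) = fvf x"
| "fvf (FAll v x) = fvf x - {v}"
| "fvf (FBox x) = fvf x"
| "fvf (FAfter d x) = fvp d \<union> fvf x"
| "fvf (FEvery d x) = fvp d \<union> fvf x"
| "fvf (FEveryFin d x) = fvp d \<union> fvf x"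
| "fvf (FUntil x I y) = fvf x \<union> fvf y"
| "fvp (PAct t) = fvt t"
| "fvp (PTest a) = fvf a"
| "fvp (PSeq d1 d2) = fvp d1 \<union> fvp d2"
| "fvp (PAlt d1 d2) = fvp d1 \<union> fvp d2"
| "fvp (PPar d1 d2) = fvp d1 \<union> fvp d2"
| "fvp (PStar d) = fvp d"

subsection \<open>The ESG sublanguage\<close>

fun trm_esg :: "trm \<Rightarrow> bool" where
  "trm_esg (TV v) = (vsort v \<noteq> SClk)"
| "trm_esg (TN n) = (nsort n \<noteq> SClk)"
| "trm_esg (TF f ts) = (fres f \<noteq> SClk \<and> list_all id (map trm_esg ts))"

definition zero_inf :: "intv \<Rightarrow> bool" where
  "zero_inf I = (\<exists>b. I = Intv 0 True None b)"

fun esgf :: "fml \<Rightarrow> bool" and esgp :: "prog \<Rightarrow> bool" where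
  "esgf (FPred p ts) = (p \<noteq> Reset \<and> p \<noteq> Gd \<and> list_all trm_esg ts)"
| "esgf (FEq t1 t2) = (trm_esg t1 \<and> trm_esg t2)"
| "esgf (FCmpC c op r) = False"
| "esgf (FCmpR r op r') = False"
| "esgf (FAnd x y) = (esgf x \<and> esgf y)"
| "esgf (FNot x) = esgf x"
| "esgf (FAll v x) = (vsort v \<noteq> SClk \<and> esgf x)"
| "esgf (FBox x) = esgf x"
| "esgf (FAfter d x) = (esgp d \<and> esgf x)"
| "esgf (FEvery d x) = (esgp d \<and> esgf x)"
| "esgf (FEveryFin d x) = (esgp d \<and> esgf x)"
| "esgf (FUntil x I y) = (zero_inf I \<and> esgf x \<and> esgf y)"
| "esgp (PAct t) = trm_esg t"
| "esgp (PTest a) = esgf a"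
| "esgp (PSeq d1 d2) = (esgp d1 \<and> esgp d2)"
| "esgp (PAlt d1 d2) = (esgp d1 \<and> esgp d2)"
| "esgp (PPar d1 d2) = (esgp d1 \<and> esgp d2)"
| "esgp (PStar d) = esgp d"

definition esg_sentence :: "fml \<Rightarrow> bool" where
  "esg_sentence \<alpha> = (wfk False \<alpha> \<and> esgf \<alpha> \<and> fvf \<alpha> = {})"

datatype 'a trc = TFin "'a list" | TInf "nat \<Rightarrow> 'a"

fun tprepend :: "'a list \<Rightarrow> 'a trc \<Rightarrow> 'a trc" where
  "tprepend z (TFin l) = TFin (z @ l)"
| "tprepend z (TInf f) = TInf (\<lambda>i. if i < length z then z ! i else f (i - length z))"

definition tsplit :: "'a trc \<Rightarrow> 'a list \<Rightarrow> 'a trc \<Rightarrow> bool" where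
  "tsplit \<tau> z1 \<tau>' = (\<tau> = tprepend z1 \<tau>')"

definition env0 :: "var \<Rightarrow> nm" where
  "env0 v = (case vsort v of SObj \<Rightarrow> NObj 0 | SAct \<Rightarrow> NAct 0 | SClk \<Rightarrow> NClk 0)"

section \<open>ESG semantics\<close>

text \<open>ESG traces: sequences of action names (action name \<open>NAct p\<close> is represented by \<open>p\<close>).\<close>
record esg_world =
  ef :: "fsym \<Rightarrow> nm list \<Rightarrow> nat list \<Rightarrow> nm"
  ep :: "psym \<Rightarrow> nm list \<Rightarrow> nat list \<Rightarrow> bool"

definition is_esg_world :: "esg_world \<Rightarrow> bool" where
  "is_esg_world w =
    ((\<forall>f ns z. nsort (ef w f ns z) = fres f) \<and>
     (\<forall>f ns z z'. frigid f \<longrightarrow> ef w f ns z = ef w f ns z') \<and>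
     (\<forall>p ns z z'. prigid p \<longrightarrow> ep w p ns z = ep w p ns z') \<and>
     (\<forall>f g ns ms z. fres f = SAct \<and> fres g = SAct \<and> ef w f ns z = ef w g ms z
          \<longrightarrow> f = g \<and> ns = ms))"

fun eeval :: "esg_world \<Rightarrow> (var \<Rightarrow> nm) \<Rightarrow> nat list \<Rightarrow> trm \<Rightarrow> nm" where
  "eeval w e z (TV v) = e v"
| "eeval w e z (TN n) = n"
| "eeval w e z (TF f ts) = ef w f (map (eeval w e z) ts) z"

fun estat :: "esg_world \<Rightarrow> (var \<Rightarrow> nm) \<Rightarrow> nat list \<Rightarrow> fml \<Rightarrow> bool" where
  "estat w e z (FPred p ts) = ep w p (map (eeval w e z) ts) z"
| "estat w e z (FEq t1 t2) = (eeval w e z t1 = eeval w e z t2)"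
| "estat w e z (FAnd a b) = (estat w e z a \<and> estat w e z b)"
| "estat w e z (FNot a) = (\<not> estat w e z a)"
| "estat w e z (FAll v a) = (\<forall>n. nsort n = vsort v \<longrightarrow> estat w (e(v := n)) z a)"
| "estat w e z _ = False"

fun efinal :: "esg_world \<Rightarrow> (var \<Rightarrow> nm) \<Rightarrow> nat list \<Rightarrow> prog \<Rightarrow> bool" where
  "efinal w e z (PAct t) = False"
| "efinal w e z (PTest a) = estat w e z a"
| "efinal w e z (PSeq d1 d2) = (efinal w e z d1 \<and> efinal w e z d2)"
| "efinal w e z (PAlt d1 d2) = (efinal w e z d1 \<or> efinal w e z d2)"
| "efinal w e z (PPar d1 d2) = (efinal w e z d1 \<and> efinal w e z d2)"
| "efinal w e z (PStar d) = True"

text \<open>\<open>estep w e z \<delta> p \<delta>'\<close>: \<open>\<langle>z,\<delta>\<rangle> \<rightarrow> \<langle>z\<cdot>p,\<delta>'\<rangle>\<close>.\<close>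
inductive estep :: "esg_world \<Rightarrow> (var \<Rightarrow> nm) \<Rightarrow> nat list \<Rightarrow> prog \<Rightarrow> nat \<Rightarrow> prog \<Rightarrow> bool"
  for w e where
  eact: "eeval w e z a = NAct p \<Longrightarrow> estep w e z (PAct a) p (PTest ttrue)"
| eseq1: "estep w e z d1 p g \<Longrightarrow> estep w e z (PSeq d1 d2) p (PSeq g d2)"
| eseq2: "efinal w e z d1 \<Longrightarrow> estep w e z d2 p d' \<Longrightarrow> estep w e z (PSeq d1 d2) p d'"
| ealt1: "estep w e z d1 p d' \<Longrightarrow> estep w e z (PAlt d1 d2) p d'"
| ealt2: "estep w e z d2 p d' \<Longrightarrow> estep w e z (PAlt d1 d2) p d'"
| estar: "estep w e z d p g \<Longrightarrow> estep w e z (PStar d) p (PSeq g (PStar d))"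
| epar1: "estep w e z d1 p g \<Longrightarrow> estep w e z (PPar d1 d2) p (PPar g d2)"
| epar2: "estep w e z d2 p g \<Longrightarrow> estep w e z (PPar d1 d2) p (PPar d1 g)"

text \<open>\<open>ereach w e z \<delta> z' \<delta>'\<close>: \<open>\<langle>z,\<delta>\<rangle> \<rightarrow>* \<langle>z z',\<delta>'\<rangle>\<close>.\<close>
inductive ereach :: "esg_world \<Rightarrow> (var \<Rightarrow> nm) \<Rightarrow> nat list \<Rightarrow> prog \<Rightarrow> nat list \<Rightarrow> prog \<Rightarrow> bool"
  for w e z d where
  erefl: "ereach w e z d [] d"
| estep_r: "ereach w e z d zs d1 \<Longrightarrow> estep w e (z @ zs) d1 p d2 \<Longrightarrow> ereach w e z d (zs @ [p]) d2"

definition eptr :: "esg_world \<Rightarrow> (var \<Rightarrow> nm) \<Rightarrow> nat list \<Rightarrow> prog \<Rightarrow> nat trc set" where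
  "eptr w e z d =
     {TFin zs | zs. \<exists>d'. ereach w e z d zs d' \<and> efinal w e (z @ zs) d'} \<union>
     {TInf f | f. \<exists>ds. ds 0 = d \<and>
        (\<forall>i. estep w e (z @ map f [0..<i]) (ds i) (f i) (ds (Suc i)) \<and>
             \<not> efinal w e (z @ map f [0..<i]) (ds i))}"

definition efin :: "esg_world \<Rightarrow> (var \<Rightarrow> nm) \<Rightarrow> nat list \<Rightarrow> prog \<Rightarrow> nat list set" where
  "efin w e z d = {zs. TFin zs \<in> eptr w e z d}"

fun esat :: "esg_world \<Rightarrow> (var \<Rightarrow> nm) \<Rightarrow> nat list \<Rightarrow> nat trc \<Rightarrow> fml \<Rightarrow> bool" where
  "esat w e z \<tau> (FPred p ts) = ep w p (map (eeval w e z) ts) z"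
| "esat w e z \<tau> (FEq t1 t2) = (eeval w e z t1 = eeval w e z t2)"
| "esat w e z \<tau> (FCmpC c op r) = False"
| "esat w e z \<tau> (FCmpR r op r') = False"
| "esat w e z \<tau> (FAnd a b) = (esat w e z \<tau> a \<and> esat w e z \<tau> b)"
| "esat w e z \<tau> (FNot a) = (\<not> esat w e z \<tau> a)"
| "esat w e z \<tau> (FAll v a) = (\<forall>n. nsort n = vsort v \<longrightarrow> esat w (e(v := n)) z \<tau> a)"
| "esat w e z \<tau> (FBox a) = (\<forall>z'. esat w e (z @ z') (TFin []) a)"
| "esat w e z \<tau> (FAfter d a) = (\<forall>z' \<in> efin w e z d. esat w e (z @ z') (TFin []) a)"
| "esat w e z \<tau> (FEvery d a) = (\<forall>\<tau>' \<in> eptr w e z d. esat w e z \<tau>' a)"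
| "esat w e z \<tau> (FEveryFin d a) = (\<forall>z' \<in> efin w e z d. esat w e z (TFin z') a)"
| "esat w e z \<tau> (FUntil a I b) =
     (\<exists>z1 \<tau>'. tsplit \<tau> z1 \<tau>' \<and> z1 \<noteq> [] \<and> esat w e (z @ z1) \<tau>' b \<and>
        (\<forall>z2 z3. z1 = z2 @ z3 \<and> z2 \<noteq> [] \<and> z3 \<noteq> [] \<longrightarrow>
            esat w e (z @ z2) (tprepend z3 \<tau>') a))"

definition esg_models :: "esg_world \<Rightarrow> nat list \<Rightarrow> fml \<Rightarrow> bool" where
  "esg_models w z \<alpha> = esat w env0 z (TFin []) \<alpha>"

section \<open>t-ESG semantics\<close>

text \<open>Timed traces are lists of elements, each a time point or an action name,
  of the form \<open>t1 p1 t2 p2 \<dots>\<close> (possibly ending in a time point after a time step).\<close>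
datatype tel = Tm real | Ac nat

fun alt_tr :: "tel list \<Rightarrow> bool" where
  "alt_tr [] = True"
| "alt_tr [Tm t] = True"
| "alt_tr (Tm t # Ac p # z) = alt_tr z"
| "alt_tr _ = False"

fun times :: "tel list \<Rightarrow> real list" where
  "times [] = []" | "times (Tm t # z) = t # times z" | "times (Ac p # z) = times z"

fun acts :: "tel list \<Rightarrow> nat list" where
  "acts [] = []" | "acts (Tm t # z) = acts z" | "acts (Ac p # z) = p # acts z"

definition ztr :: "tel list \<Rightarrow> bool" where
  "ztr z = (alt_tr z \<and> sorted (times z) \<and> (\<forall>t \<in> set (times z). 0 \<le> t))"

text \<open>Time--action sequences \<open>(p1,t1)\<cdots>(pk,tk) = t1 p1 \<cdots> tk pk\<close>.\<close>
definition pairseq :: "tel list \<Rightarrow> bool" where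
  "pairseq z = (alt_tr z \<and> even (length z))"

definition symtr :: "tel list \<Rightarrow> nat list" where
  "symtr z = acts z"

text \<open>\<open>time z\<close>: time of the last action in \<open>z\<close> (0 if there is none).\<close>
fun ltime :: "real \<Rightarrow> real \<Rightarrow> tel list \<Rightarrow> real" where
  "ltime r cur [] = r"
| "ltime r cur (Tm t # z) = ltime r t z"
| "ltime r cur (Ac p # z) = ltime cur cur z"

definition time :: "tel list \<Rightarrow> real" where
  "time z = ltime 0 0 z"

record tesg_world =
  tf :: "fsym \<Rightarrow> nm list \<Rightarrow> tel list \<Rightarrow> nm"
  tp :: "psym \<Rightarrow> nm list \<Rightarrow> tel list \<Rightarrow> bool"
  tc :: "nat \<Rightarrow> tel list \<Rightarrow> real"

definition is_tesg_world :: "tesg_world \<Rightarrow> bool" where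
  "is_tesg_world w =
    ((\<forall>f ns z. ztr z \<longrightarrow> nsort (tf w f ns z) = fres f) \<and>
     (\<forall>f ns z z'. frigid f \<and> ztr z \<and> ztr z' \<longrightarrow> tf w f ns z = tf w f ns z') \<and>
     (\<forall>p ns z z'. prigid p \<and> ztr z \<and> ztr z' \<longrightarrow> tp w p ns z = tp w p ns z') \<and>
     (\<forall>f g ns ms z. ztr z \<and> fres f = SAct \<and> fres g = SAct \<and> tf w f ns z = tf w g ms z
          \<longrightarrow> f = g \<and> ns = ms) \<and>
     (\<forall>f g ns ms z. ztr z \<and> fres f = SClk \<and> fres g = SClk \<and> tf w f ns z = tf w g ms z
          \<longrightarrow> f = g \<and> ns = ms) \<and>
     (\<forall>c z. ztr z \<longrightarrow> tc w c z \<ge> 0) \<and>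
     (\<forall>c. tc w c [] = 0) \<and>
     (\<forall>c z t. ztr (z @ [Tm t]) \<longrightarrow> tc w c (z @ [Tm t]) = tc w c z + t - time z) \<and>
     (\<forall>c z p. ztr (z @ [Ac p]) \<longrightarrow>
          tc w c (z @ [Ac p]) = (if tp w Reset [NClk c] (z @ [Ac p]) then 0 else tc w c z)))"

fun teval :: "tesg_world \<Rightarrow> (var \<Rightarrow> nm) \<Rightarrow> tel list \<Rightarrow> trm \<Rightarrow> nm" where
  "teval w e z (TV v) = e v"
| "teval w e z (TN n) = n"
| "teval w e z (TF f ts) = tf w f (map (teval w e z) ts) z"

fun tstat :: "tesg_world \<Rightarrow> (var \<Rightarrow> nm) \<Rightarrow> tel list \<Rightarrow> fml \<Rightarrow> bool" where
  "tstat w e z (FPred p ts) = tp w p (map (teval w e z) ts) z"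
| "tstat w e z (FEq t1 t2) = (teval w e z t1 = teval w e z t2)"
| "tstat w e z (FCmpC c op r) =
     (case teval w e z c of NClk k \<Rightarrow> cmpr op (tc w k z) (of_rat r) | _ \<Rightarrow> False)"
| "tstat w e z (FCmpR r op r') = cmpr op r r'"
| "tstat w e z (FAnd a b) = (tstat w e z a \<and> tstat w e z b)"
| "tstat w e z (FNot a) = (\<not> tstat w e z a)"
| "tstat w e z (FAll v a) = (\<forall>n. nsort n = vsort v \<longrightarrow> tstat w (e(v := n)) z a)"
| "tstat w e z _ = False"

fun tfinal :: "tesg_world \<Rightarrow> (var \<Rightarrow> nm) \<Rightarrow> tel list \<Rightarrow> prog \<Rightarrow> bool" where
  "tfinal w e z (PAct t) = False"
| "tfinal w e z (PTest a) = tstat w e z a"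
| "tfinal w e z (PSeq d1 d2) = (tfinal w e z d1 \<and> tfinal w e z d2)"
| "tfinal w e z (PAlt d1 d2) = (tfinal w e z d1 \<or> tfinal w e z d2)"
| "tfinal w e z (PPar d1 d2) = (tfinal w e z d1 \<and> tfinal w e z d2)"
| "tfinal w e z (PStar d) = True"

text \<open>Action step \<open>\<rightarrow>_s\<close>: \<open>tstep w e z \<delta> p \<delta>'\<close> means \<open>\<langle>z,\<delta>\<rangle> \<rightarrow>_s \<langle>z\<cdot>p,\<delta>'\<rangle>\<close>.\<close>
inductive tstep :: "tesg_world \<Rightarrow> (var \<Rightarrow> nm) \<Rightarrow> tel list \<Rightarrow> prog \<Rightarrow> nat \<Rightarrow> prog \<Rightarrow> bool"
  for w e where
  tact: "teval w e z a = NAct p \<Longrightarrow> tstep w e z (PAct a) p (PTest ttrue)"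
| tseq1: "tstep w e z d1 p g \<Longrightarrow> tstep w e z (PSeq d1 d2) p (PSeq g d2)"
| tseq2: "tfinal w e z d1 \<Longrightarrow> tstep w e z d2 p d' \<Longrightarrow> tstep w e z (PSeq d1 d2) p d'"
| talt1: "tstep w e z d1 p d' \<Longrightarrow> tstep w e z (PAlt d1 d2) p d'"
| talt2: "tstep w e z d2 p d' \<Longrightarrow> tstep w e z (PAlt d1 d2) p d'"
| tstar: "tstep w e z d p g \<Longrightarrow> tstep w e z (PStar d) p (PSeq g (PStar d))"
| tpar1: "tstep w e z d1 p g \<Longrightarrow> tstep w e z (PPar d1 d2) p (PPar g d2)"
| tpar2: "tstep w e z d2 p g \<Longrightarrow> tstep w e z (PPar d1 d2) p (PPar d1 g)"

text \<open>A transition: a time step \<open>\<langle>z,\<delta>\<rangle> \<rightarrow> \<langle>z\<cdot>t,\<delta>\<rangle>\<close> with \<open>t \<ge> time z\<close> followed by an action step.\<close>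
inductive treach :: "tesg_world \<Rightarrow> (var \<Rightarrow> nm) \<Rightarrow> tel list \<Rightarrow> prog \<Rightarrow> tel list \<Rightarrow> prog \<Rightarrow> bool"
  for w e z d where
  trefl: "treach w e z d [] d"
| tstep_r: "treach w e z d zs d1 \<Longrightarrow> t \<ge> time (z @ zs) \<Longrightarrow>
            tstep w e (z @ zs @ [Tm t]) d1 p d2 \<Longrightarrow> treach w e z d (zs @ [Tm t, Ac p]) d2"

definition tptr :: "tesg_world \<Rightarrow> (var \<Rightarrow> nm) \<Rightarrow> tel list \<Rightarrow> prog \<Rightarrow> tel trc set" where
  "tptr w e z d =
     {TFin zs | zs. \<exists>d'. treach w e z d zs d' \<and> tfinal w e (z @ zs) d'} \<union>
     {TInf f | f. \<exists>ds. ds 0 = d \<and>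
        (\<forall>i. \<exists>t p. f (2*i) = Tm t \<and> f (2*i+1) = Ac p \<and>
             t \<ge> time (z @ map f [0..<2*i]) \<and>
             tstep w e (z @ map f [0..<2*i] @ [Tm t]) (ds i) p (ds (Suc i)) \<and>
             \<not> tfinal w e (z @ map f [0..<2*i]) (ds i))}"

definition tfin :: "tesg_world \<Rightarrow> (var \<Rightarrow> nm) \<Rightarrow> tel list \<Rightarrow> prog \<Rightarrow> tel list set" where
  "tfin w e z d = {zs. TFin zs \<in> tptr w e z d}"

fun tsat :: "tesg_world \<Rightarrow> (var \<Rightarrow> nm) \<Rightarrow> tel list \<Rightarrow> tel trc \<Rightarrow> fml \<Rightarrow> bool" where
  "tsat w e z \<tau> (FPred p ts) = tp w p (map (teval w e z) ts) z"
| "tsat w e z \<tau> (FEq t1 t2) = (teval w e z t1 = teval w e z t2)"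
| "tsat w e z \<tau> (FCmpC c op r) =
     (case teval w e z c of NClk k \<Rightarrow> cmpr op (tc w k z) (of_rat r) | _ \<Rightarrow> False)"
| "tsat w e z \<tau> (FCmpR r op r') = cmpr op r r'"
| "tsat w e z \<tau> (FAnd a b) = (tsat w e z \<tau> a \<and> tsat w e z \<tau> b)"
| "tsat w e z \<tau> (FNot a) = (\<not> tsat w e z \<tau> a)"
| "tsat w e z \<tau> (FAll v a) = (\<forall>n. nsort n = vsort v \<longrightarrow> tsat w (e(v := n)) z \<tau> a)"
| "tsat w e z \<tau> (FBox a) = (\<forall>z'. ztr (z @ z') \<and> pairseq z' \<longrightarrow> tsat w e (z @ z') (TFin []) a)"
| "tsat w e z \<tau> (FAfter d a) = (\<forall>z' \<in> tfin w e z d. tsat w e (z @ z') (TFin []) a)"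
| "tsat w e z \<tau> (FEvery d a) = (\<forall>\<tau>' \<in> tptr w e z d. tsat w e z \<tau>' a)"
| "tsat w e z \<tau> (FEveryFin d a) = (\<forall>z' \<in> tfin w e z d. tsat w e z (TFin z') a)"
| "tsat w e z \<tau> (FUntil a I b) =
     (\<exists>z1 \<tau>'. tsplit \<tau> z1 \<tau>' \<and> pairseq z1 \<and> z1 \<noteq> [] \<and> tsat w e (z @ z1) \<tau>' b \<and>
        inI (time z1 - time z) I \<and>
        (\<forall>z2 z3. z1 = z2 @ z3 \<and> pairseq z2 \<and> z2 \<noteq> [] \<and> pairseq z3 \<and> z3 \<noteq> [] \<longrightarrow>
            tsat w e (z @ z2) (tprepend z3 \<tau>') a))"

definition tesg_models :: "tesg_world \<Rightarrow> tel list \<Rightarrow> fml \<Rightarrow> bool" where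
  "tesg_models w z \<alpha> = tsat w env0 z (TFin []) \<alpha>"

section \<open>Time-extended worlds\<close>

text \<open>\<open>wt\<close> is a time extension of \<open>w\<close>: a t-ESG world agreeing with \<open>w\<close> on all primitive
  terms and formulas of the ESG language, evaluated on the symbolic trace; clocks arbitrary
  subject to the t-ESG world constraints.\<close>
definition time_ext :: "esg_world \<Rightarrow> tesg_world \<Rightarrow> bool" where
  "time_ext w wt =
    (is_tesg_world wt \<and>
     (\<forall>f ns z. ztr z \<and> fres f \<noteq> SClk \<and> (\<forall>n \<in> set ns. nsort n \<noteq> SClk) \<longrightarrow>
         tf wt f ns z = ef w f ns (symtr z)) \<and>
     (\<forall>p ns z. ztr z \<and> p \<noteq> Reset \<and> p \<noteq> Gd \<and> (\<forall>n \<in> set ns. nsort n \<noteq> SClk) \<longrightarrow>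
         tp wt p ns z = ep w p ns (symtr z)))"

end

theory Submission imports Defs begin

definition lift :: "real \<Rightarrow> nat list \<Rightarrow> tel list" where
  "lift T u = concat (map (\<lambda>p. [Tm T, Ac p]) u)"

fun aof :: "tel \<Rightarrow> nat" where "aof (Ac p) = p" | "aof (Tm t) = 0"

fun symt :: "tel trc \<Rightarrow> nat trc" where
  "symt (TFin zs) = TFin (acts zs)"
| "symt (TInf g) = TInf (\<lambda>i. aof (g (2*i+1)))"

fun good :: "tel list \<Rightarrow> tel trc \<Rightarrow> bool" where
  "good z (TFin zs) = (ztr (z@zs) \<and> pairseq zs)"
| "good z (TInf g) = (\<forall>n. even n \<longrightarrow> ztr (z @ map g [0..<n]) \<and> pairseq (map g [0..<n]))"

definition wse :: "(var \<Rightarrow> nm) \<Rightarrow> bool" where "wse e = (\<forall>v. nsort (e v) = vsort v)"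

lemma acts_append[simp]: "acts (a @ b) = acts a @ acts b"
  by (induction a rule: acts.induct) auto
lemma times_append[simp]: "times (a @ b) = times a @ times b"
  by (induction a rule: times.induct) auto

lemma pairseq_simps[simp]:
  "pairseq []" "pairseq (Tm t # Ac p # z) = pairseq z" "\<not> pairseq (Ac p # z)"
  "\<not> pairseq [Tm t]" "\<not> pairseq (Tm t # Tm s # z)"
  by (auto simp: pairseq_def)

lemma pairseq_induct[consumes 1, case_names Nil Cons]:
  assumes "pairseq z" "P []" "\<And>t p z. pairseq z \<Longrightarrow> P z \<Longrightarrow> P (Tm t # Ac p # z)"
  shows "P z"
  using assms(1)
  apply (induction z rule: alt_tr.induct)
  using assms(2,3) apply simp_all
  apply (metis pairseq_simps(3) pairseq_simps(5) tel.exhaust)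
  done

lemma alt_append: "pairseq a \<Longrightarrow> alt_tr (a@b) = alt_tr b"
  by (induction a rule: pairseq_induct) auto
lemma pairseq_append: "pairseq a \<Longrightarrow> pairseq (a@b) = pairseq b"
  by (induction a rule: pairseq_induct) auto
lemma alt_prefix: "alt_tr (a@b) \<Longrightarrow> alt_tr a"
  by (induction a arbitrary: b rule: alt_tr.induct) auto
lemma ztr_prefix: "ztr (a@b) \<Longrightarrow> ztr a"
  unfolding ztr_def using alt_prefix sorted_append by fastforce

lemma times_nil: "pairseq z \<Longrightarrow> (times z = []) = (z = [])"
  by (induction z rule: pairseq_induct) auto
lemma acts_nil: "pairseq z \<Longrightarrow> (acts z = []) = (z = [])"
  by (induction z rule: pairseq_induct) auto

lemma ltime_pairseq: "pairseq z \<Longrightarrow> ltime r c z = (if z = [] then r else last (times z))"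
  by (induction z arbitrary: r c rule: pairseq_induct) (auto simp: times_nil)

lemma time_pairseq: "pairseq z \<Longrightarrow> time z = (if z = [] then 0 else last (times z))"
  by (simp add: time_def ltime_pairseq)

lemma sorted_le_last: "sorted xs \<Longrightarrow> x \<in> set xs \<Longrightarrow> x \<le> last xs"
  by (induction xs) auto

lemma time_nonneg: "ztr z \<Longrightarrow> pairseq z \<Longrightarrow> time z \<ge> 0"
  by (auto simp: time_pairseq ztr_def times_nil)

lemma time_ge: "ztr z \<Longrightarrow> pairseq z \<Longrightarrow> x \<in> set (times z) \<Longrightarrow> x \<le> time z"
  by (auto simp: time_pairseq ztr_def sorted_le_last)

lemma ztr_snoc:
  assumes "ztr z" "pairseq z" "time z \<le> t"
  shows "ztr (z @ [Tm t])" "ztr (z @ [Tm t, Ac p])"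
  using assms time_ge[OF assms(1,2)] time_nonneg[OF assms(1,2)]
  by (auto simp: ztr_def alt_append sorted_append intro: order_trans)

lemma time_snoc_pair: "pairseq z \<Longrightarrow> time (z @ [Tm t, Ac p]) = t"
  by (simp add: time_pairseq pairseq_append)

lemma time_app: "pairseq z \<Longrightarrow> pairseq z1 \<Longrightarrow> z1 \<noteq> [] \<Longrightarrow> time (z @ z1) = time z1"
  by (simp add: time_pairseq pairseq_append times_nil)

lemma time_mono: "ztr (z @ z1) \<Longrightarrow> pairseq z \<Longrightarrow> pairseq z1 \<Longrightarrow> z1 \<noteq> [] \<Longrightarrow> time z \<le> time z1"
proof -
  assume a: "ztr (z @ z1)" "pairseq z" "pairseq z1" "z1 \<noteq> []"
  have z1: "time z1 = time (z @ z1)" using a time_app by simp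
  have p: "pairseq (z @ z1)" using a pairseq_append by simp
  show ?thesis
  proof (cases "z = []")
    case True then show ?thesis using time_nonneg[OF a(1) p] z1 by (simp add: time_def)
  next
    case False
    then have "time z \<in> set (times (z@z1))" using a(2) by (simp add: time_pairseq times_nil)
    then show ?thesis using time_ge[OF a(1) p] z1 by simp
  qed
qed

lemma acts_lift[simp]: "acts (lift T u) = u"
  by (induction u) (auto simp: lift_def)
lemma pairseq_lift[simp]: "pairseq (lift T u)"
  by (induction u) (auto simp: lift_def)
lemma lift_snoc: "lift T (u @ [p]) = lift T u @ [Tm T, Ac p]"
  by (simp add: lift_def)

lemma ztr_lift: "ztr z \<Longrightarrow> pairseq z \<Longrightarrow>
   ztr (z @ lift (time z) u) \<and> time (z @ lift (time z) u) = time z"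
proof (induction u rule: rev_induct)
  case Nil then show ?case by (simp add: lift_def)
next
  case (snoc p u)
  then have h: "ztr (z @ lift (time z) u)" "time (z @ lift (time z) u) = time z" by auto
  have ps: "pairseq (z @ lift (time z) u)" using snoc pairseq_append by simp
  have "ztr ((z @ lift (time z) u) @ [Tm (time z), Ac p])" using ztr_snoc(2)[OF h(1) ps] h(2) by simp
  then show ?case using time_snoc_pair[OF ps]
    by (simp add: lift_snoc)
qed

lemma len_pairseq: "pairseq z \<Longrightarrow> length z = 2 * length (acts z)"
  by (induction z rule: pairseq_induct) auto
lemma nth_pairseq: "pairseq z \<Longrightarrow> i < length (acts z) \<Longrightarrow> z ! (2*i+1) = Ac (acts z ! i)"
proof (induction z arbitrary: i rule: pairseq_induct)
  case (Cons t p z)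
  then show ?case by (cases i) auto
qed simp
lemma take_pairseq: "pairseq z \<Longrightarrow> even n \<Longrightarrow> pairseq (take n z) \<and> pairseq (drop n z)"
proof (induction z arbitrary: n rule: pairseq_induct)
  case Nil then show ?case by simp
next
  case (Cons t p z)
  show ?case
  proof (cases n)
    case 0 then show ?thesis using Cons by simp
  next
    case (Suc m)
    then obtain k where k: "n = Suc (Suc k)" using Cons(3)
      by (cases m) auto
    then have "even k" using Cons(3) by simp
    then show ?thesis using Cons k by simp
  qed
qed
lemma acts_take: "pairseq z \<Longrightarrow> acts (take (2*k) z) = take k (acts z)"
proof (induction z arbitrary: k rule: pairseq_induct)
  case (Cons t p z)
  then show ?case by (cases k) auto
qed simp

lemma map_prep: "map (\<lambda>i. if i < length z1 then z1!i else h (i - length z1)) [0..<n] =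
   (if n \<le> length z1 then take n z1 else z1 @ map h [0..<n - length z1])"
proof (induction n)
  case 0 then show ?case by simp
next
  case (Suc n)
  show ?case
  proof (cases "Suc n \<le> length z1")
    case True then show ?thesis using Suc by (simp add: take_Suc_conv_app_nth)
  next
    case False
    then have "Suc n - length z1 = Suc (n - length z1)" by simp
    then show ?thesis using Suc False by auto
  qed
qed


lemma acts_map_pref: assumes "pairseq (map g [0..<2*i])"
  shows "acts (map g [0..<2*i]) = map (\<lambda>j. aof (g (2*j+1))) [0..<i]"
proof -
  let ?z = "map g [0..<2*i]"
  have L: "length (acts ?z) = i" using len_pairseq[OF assms] by simp
  show ?thesis
  proof (rule nth_equalityI)
    show "length (acts ?z) = length (map (\<lambda>j. aof (g (2*j+1))) [0..<i])" using L by simp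
  next
    fix j assume j: "j < length (acts ?z)"
    have "?z ! (2*j+1) = Ac (acts ?z ! j)" using nth_pairseq[OF assms j] .
    moreover have "?z ! (2*j+1) = g (2*j+1)" using j L by simp
    ultimately show "acts ?z ! j = map (\<lambda>j. aof (g (2*j+1))) [0..<i] ! j" using j L by simp
  qed
qed

lemma tprepend_inj: assumes "tprepend u a = tprepend u b" shows "a = b"
proof (cases a)
  case (TFin l1) then show ?thesis using assms by (cases b) auto
next
  case (TInf f1)
  then obtain f2 where b: "b = TInf f2" using assms by (cases b) auto
  have eq: "(\<lambda>i. if i < length u then u ! i else f1 (i - length u)) =
            (\<lambda>i. if i < length u then u ! i else f2 (i - length u))"
    using assms TInf b by simp
  have "f1 i = f2 i" for i using fun_cong[OF eq, of "i + length u"] by simp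
  then show ?thesis using TInf b by auto
qed

lemma symt_prepend: assumes "pairseq z1"
  shows "symt (tprepend z1 \<tau>) = tprepend (acts z1) (symt \<tau>)"
proof (cases \<tau>)
  case (TFin l) then show ?thesis by simp
next
  case (TInf h)
  have L: "length z1 = 2 * length (acts z1)" using len_pairseq[OF assms] .
  have "aof (if 2*i+1 < length z1 then z1 ! (2*i+1) else h (2*i+1 - length z1)) =
        (if i < length (acts z1) then acts z1 ! i else aof (h (2 * (i - length (acts z1)) + 1)))" for i
  proof (cases "i < length (acts z1)")
    case True then show ?thesis using L nth_pairseq[OF assms True] by simp
  next
    case False
    then have "2*i+1 - length z1 = 2 * (i - length (acts z1)) + 1" using L by simp
    then show ?thesis using False L by simp
  qed
  then show ?thesis using TInf by (simp add: fun_eq_iff)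
qed

lemma good_prepend: assumes "pairseq z1"
  shows "good z (tprepend z1 \<tau>) = (ztr (z@z1) \<and> good (z@z1) \<tau>)"
proof (cases \<tau>)
  case (TFin l)
  show ?thesis using TFin ztr_prefix[of "z@z1" l] pairseq_append[OF assms] by auto
next
  case (TInf h)
  define g' where "g' = (\<lambda>i. if i < length z1 then z1!i else h (i - length z1))"
  have mp: "map g' [0..<n] = (if n \<le> length z1 then take n z1 else z1 @ map h [0..<n - length z1])" for n
    unfolding g'_def by (rule map_prep)
  have ev: "even (length z1)" using len_pairseq[OF assms] by simp
  have tp: "tprepend z1 \<tau> = TInf g'" using TInf g'_def by simp
  show ?thesis
  proof
    assume G: "good z (tprepend z1 \<tau>)"
    then have G': "\<And>n. even n \<Longrightarrow> ztr (z @ map g' [0..<n]) \<and> pairseq (map g' [0..<n])"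
      using tp by simp
    have "ztr (z@z1)" using G'[OF ev] mp[of "length z1"] by simp
    moreover have "good (z@z1) \<tau>"
    proof -
      have "ztr (z @ z1 @ map h [0..<n]) \<and> pairseq (map h [0..<n])" if "even n" for n
      proof -
        have "even (n + length z1)" using that ev by simp
        from G'[OF this] mp[of "n + length z1"] show ?thesis
          using pairseq_append[OF assms] by (cases "n = 0") auto
      qed
      then show ?thesis using TInf by simp
    qed
    ultimately show "ztr (z@z1) \<and> good (z@z1) \<tau>" by simp
  next
    assume H: "ztr (z@z1) \<and> good (z@z1) \<tau>"
    have "ztr (z @ map g' [0..<n]) \<and> pairseq (map g' [0..<n])" if "even n" for n
    proof (cases "n \<le> length z1")
      case True
      have "ztr ((z @ take n z1) @ drop n z1)" using H by simp
      then have "ztr (z @ take n z1)" by (rule ztr_prefix)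
      then show ?thesis using True mp[of n] take_pairseq[OF assms that] by simp
    next
      case False
      have "even (n - length z1)" using that ev False by simp
      then show ?thesis using False mp[of n] H TInf pairseq_append[OF assms] by simp
    qed
    then show "good z (tprepend z1 \<tau>)" using tp by simp
  qed
qed

lemma sym_split: assumes "good z \<tau>" "tsplit (symt \<tau>) u \<sigma>"
  shows "\<exists>z1 \<tau>'. tsplit \<tau> z1 \<tau>' \<and> pairseq z1 \<and> acts z1 = u"
proof (cases \<tau>)
  case (TFin zs)
  then obtain l where l: "acts zs = u @ l" using assms(2) by (cases \<sigma>) (auto simp: tsplit_def)
  have ps: "pairseq zs" using assms(1) TFin by simp
  have "acts (take (2 * length u) zs) = u" using acts_take[OF ps] l by simp
  moreover have "pairseq (take (2 * length u) zs)" using take_pairseq[OF ps] by simp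
  moreover have "tsplit \<tau> (take (2 * length u) zs) (TFin (drop (2 * length u) zs))"
    using TFin by (simp add: tsplit_def)
  ultimately show ?thesis by blast
next
  case (TInf g)
  let ?k = "length u"
  obtain h where h: "\<sigma> = TInf h" using assms(2) TInf by (cases \<sigma>) (auto simp: tsplit_def)
  have eq: "(\<lambda>i. aof (g (2*i+1))) = (\<lambda>i. if i < ?k then u ! i else h (i - ?k))"
    using assms(2) TInf h by (simp add: tsplit_def)
  have ps: "pairseq (map g [0..<2*?k])" using assms(1) TInf by simp
  have "acts (map g [0..<2*?k]) = map (\<lambda>j. aof (g (2*j+1))) [0..<?k]"
    by (rule acts_map_pref[OF ps])
  also have "\<dots> = u" using eq by (auto intro: nth_equalityI simp: fun_eq_iff)
  finally have a: "acts (map g [0..<2*?k]) = u" .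
  have "tsplit \<tau> (map g [0..<2*?k]) (TInf (\<lambda>i. g (i + 2*?k)))"
    using TInf by (simp add: tsplit_def fun_eq_iff)
  then show ?thesis using a ps by blast
qed


declare symtr_def[simp]

lemma esgf_ttrue[simp]: "esgf ttrue" by (simp add: ttrue_def)

lemma estep_esgp: "estep w e z d p d' \<Longrightarrow> esgp d \<Longrightarrow> esgp d'"
  by (induction rule: estep.induct) auto
lemma tstep_esgp: "tstep w e z d p d' \<Longrightarrow> esgp d \<Longrightarrow> esgp d'"
  by (induction rule: tstep.induct) auto

lemma wse_upd: "wse e \<Longrightarrow> nsort n = vsort v \<Longrightarrow> wse (e(v := n))"
  by (simp add: wse_def)

lemma wse_env0: "wse env0"
  unfolding wse_def env0_def by (auto split: srt.splits)

context
  fixes w :: esg_world and wt :: tesg_world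
  assumes W: "is_esg_world w" and T: "time_ext w wt"
begin

lemma eval_eq: "trm_esg t \<Longrightarrow> wse e \<Longrightarrow> ztr z \<Longrightarrow>
   teval wt e z t = eeval w e (acts z) t \<and> nsort (eeval w e (acts z) t) \<noteq> SClk"
proof (induction t)
  case (TV v) then show ?case by (simp add: wse_def)
next
  case (TN n) then show ?case by simp
next
  case (TF f ts)
  have all: "\<forall>x\<in>set ts. trm_esg x" using TF.prems(1) by (simp add: list_all_iff)
  have m: "map (teval wt e z) ts = map (eeval w e (acts z)) ts"
    using TF.IH all TF.prems by auto
  have nc: "\<forall>n\<in>set (map (eeval w e (acts z)) ts). nsort n \<noteq> SClk"
    using TF.IH all TF.prems by auto
  have fr: "fres f \<noteq> SClk" using TF.prems(1) by simp
  have "tf wt f (map (eeval w e (acts z)) ts) z = ef w f (map (eeval w e (acts z)) ts) (acts z)"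
    using T fr nc TF.prems(3) unfolding time_ext_def by auto
  moreover have "nsort (ef w f (map (eeval w e (acts z)) ts) (acts z)) = fres f"
    using W unfolding is_esg_world_def by auto
  ultimately show ?case using fr by (simp add: m)
qed

lemma evals_eq: "list_all trm_esg ts \<Longrightarrow> wse e \<Longrightarrow> ztr z \<Longrightarrow>
   map (teval wt e z) ts = map (eeval w e (acts z)) ts \<and>
   (\<forall>n\<in>set (map (eeval w e (acts z)) ts). nsort n \<noteq> SClk)"
  using eval_eq by (auto simp: list_all_iff)

lemma stat_eq: "esgf a \<Longrightarrow> wse e \<Longrightarrow> ztr z \<Longrightarrow> tstat wt e z a = estat w e (acts z) a"
proof (induction a arbitrary: e rule: fml.induct[where ?P2.0 = "\<lambda>_. True"])
  case (FPred p ts)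
  then have "p \<noteq> Reset" "p \<noteq> Gd" "list_all trm_esg ts" by auto
  then show ?case using evals_eq[of ts e z] FPred.prems T unfolding time_ext_def by (simp add: evals_eq)
next
  case (FEq t1 t2) then show ?case using eval_eq by simp
next
  case (FAll v a) then show ?case using wse_upd by simp
qed auto

lemma final_eq: "esgp d \<Longrightarrow> wse e \<Longrightarrow> ztr z \<Longrightarrow> tfinal wt e z d = efinal w e (acts z) d"
  by (induction d rule: prog.induct[where ?P1.0 = "\<lambda>_. True"]) (auto simp: stat_eq)

lemma step_t2e: "tstep wt e z d p d' \<Longrightarrow> esgp d \<Longrightarrow> wse e \<Longrightarrow> ztr z \<Longrightarrow> estep w e (acts z) d p d'"
proof (induction rule: tstep.induct)
  case (tact z a p) then show ?case using eval_eq[of a e z] by (auto intro: estep.intros)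
next
  case (tseq2 z d1 d2 p d') then show ?case using final_eq by (auto intro: estep.intros)
qed (auto intro: estep.intros)

lemma step_e2t': "estep w e zz d p d' \<Longrightarrow> zz = acts z \<Longrightarrow> esgp d \<Longrightarrow> wse e \<Longrightarrow> ztr z \<Longrightarrow> tstep wt e z d p d'"
proof (induction rule: estep.induct)
  case (eact zz a p) then show ?case using eval_eq[of a e z] by (auto intro: tstep.intros)
next
  case (eseq2 zz d1 d2 p d') then show ?case using final_eq by (auto intro: tstep.intros)
qed (auto intro: tstep.intros)

lemma step_e2t: "estep w e (acts z) d p d' \<Longrightarrow> esgp d \<Longrightarrow> wse e \<Longrightarrow> ztr z \<Longrightarrow> tstep wt e z d p d'"
  using step_e2t' by blast

lemma reach_t2e: "treach wt e z d zs d' \<Longrightarrow> esgp d \<Longrightarrow> wse e \<Longrightarrow> ztr z \<Longrightarrow> pairseq z \<Longrightarrow>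
   ereach w e (acts z) d (acts zs) d' \<and> ztr (z@zs) \<and> pairseq zs \<and> esgp d'"
proof (induction rule: treach.induct)
  case trefl then show ?case by (auto intro: ereach.intros)
next
  case (tstep_r zs d1 t p d2)
  then have ih: "ereach w e (acts z) d (acts zs) d1" "ztr (z@zs)" "pairseq zs" "esgp d1" by auto
  have ps: "pairseq (z@zs)" using ih tstep_r.prems pairseq_append by simp
  have z1: "ztr ((z@zs) @ [Tm t])" using ztr_snoc(1)[OF ih(2) ps tstep_r.hyps(2)] .
  have z2: "ztr ((z@zs) @ [Tm t, Ac p])" using ztr_snoc(2)[OF ih(2) ps tstep_r.hyps(2)] .
  have st: "estep w e (acts z @ acts zs) d1 p d2"
    using step_t2e[OF tstep_r.hyps(3) ih(4) tstep_r.prems(2)] z1 by simp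
  have "ereach w e (acts z) d (acts zs @ [p]) d2" using ereach.estep_r[OF ih(1) st] .
  moreover have "esgp d2" using tstep_esgp[OF tstep_r.hyps(3) ih(4)] .
  moreover have "pairseq (zs @ [Tm t, Ac p])" using ih(3) pairseq_append by simp
  ultimately show ?case using z2 by simp
qed

lemma reach_e2t': "ereach w e zz d u d' \<Longrightarrow> zz = acts z \<Longrightarrow> esgp d \<Longrightarrow> wse e \<Longrightarrow> ztr z \<Longrightarrow> pairseq z \<Longrightarrow>
   treach wt e z d (lift (time z) u) d' \<and> esgp d'"
proof (induction rule: ereach.induct)
  case erefl then show ?case by (auto intro: treach.intros simp: lift_def)
next
  case (estep_r u d1 p d2)
  then have ih: "treach wt e z d (lift (time z) u) d1" "esgp d1" by auto
  have zl: "ztr (z @ lift (time z) u)" "time (z @ lift (time z) u) = time z"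
    using ztr_lift estep_r.prems by auto
  have ps: "pairseq (z @ lift (time z) u)" using estep_r.prems pairseq_append by simp
  have z1: "ztr ((z @ lift (time z) u) @ [Tm (time z)])" using ztr_snoc(1)[OF zl(1) ps] zl(2) by simp
  have "tstep wt e ((z @ lift (time z) u) @ [Tm (time z)]) d1 p d2"
    using step_e2t[of e "(z @ lift (time z) u) @ [Tm (time z)]" d1 p d2] estep_r.hyps(2) estep_r.prems z1 ih(2)
    by simp
  then have "tstep wt e (z @ lift (time z) u @ [Tm (time z)]) d1 p d2" by simp
  from treach.tstep_r[OF ih(1) _ this] zl(2)
  have "treach wt e z d (lift (time z) u @ [Tm (time z), Ac p]) d2" by simp
  then show ?case using estep_esgp[OF estep_r.hyps(2) ih(2)] by (simp add: lift_snoc)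
qed

lemma reach_e2t: "ereach w e (acts z) d u d' \<Longrightarrow> esgp d \<Longrightarrow> wse e \<Longrightarrow> ztr z \<Longrightarrow> pairseq z \<Longrightarrow>
   treach wt e z d (lift (time z) u) d' \<and> esgp d'"
  using reach_e2t' by blast

lemma fin_t2e: "zs \<in> tfin wt e z d \<Longrightarrow> esgp d \<Longrightarrow> wse e \<Longrightarrow> ztr z \<Longrightarrow> pairseq z \<Longrightarrow>
   acts zs \<in> efin w e (acts z) d \<and> ztr (z@zs) \<and> pairseq zs"
proof -
  assume a: "zs \<in> tfin wt e z d" "esgp d" "wse e" "ztr z" "pairseq z"
  then obtain d' where r: "treach wt e z d zs d'" "tfinal wt e (z @ zs) d'"
    by (auto simp: tfin_def tptr_def)
  from reach_t2e[OF r(1) a(2-5)] have h: "ereach w e (acts z) d (acts zs) d'" "ztr (z@zs)" "pairseq zs" "esgp d'"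
    by auto
  have "efinal w e (acts z @ acts zs) d'" using final_eq[OF h(4) a(3) h(2)] r(2) by simp
  then show ?thesis using h by (auto simp: efin_def eptr_def)
qed

lemma fin_e2t: "u \<in> efin w e (acts z) d \<Longrightarrow> esgp d \<Longrightarrow> wse e \<Longrightarrow> ztr z \<Longrightarrow> pairseq z \<Longrightarrow>
   lift (time z) u \<in> tfin wt e z d"
proof -
  assume a: "u \<in> efin w e (acts z) d" "esgp d" "wse e" "ztr z" "pairseq z"
  then obtain d' where r: "ereach w e (acts z) d u d'" "efinal w e (acts z @ u) d'"
    by (auto simp: efin_def eptr_def)
  from reach_e2t[OF r(1) a(2-5)] have h: "treach wt e z d (lift (time z) u) d'" "esgp d'" by auto
  have zl: "ztr (z @ lift (time z) u)" using ztr_lift a by auto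
  have "tfinal wt e (z @ lift (time z) u) d'" using final_eq[OF h(2) a(3) zl] r(2) by simp
  then show ?thesis using h by (auto simp: tfin_def tptr_def)
qed

lemma ptr_t2e: "\<tau> \<in> tptr wt e z d \<Longrightarrow> esgp d \<Longrightarrow> wse e \<Longrightarrow> ztr z \<Longrightarrow> pairseq z \<Longrightarrow>
   good z \<tau> \<and> symt \<tau> \<in> eptr w e (acts z) d"
proof -
  assume a: "\<tau> \<in> tptr wt e z d" "esgp d" "wse e" "ztr z" "pairseq z"
  show ?thesis
  proof (cases \<tau>)
    case (TFin zs)
    then have "zs \<in> tfin wt e z d" using a(1) by (simp add: tfin_def)
    from fin_t2e[OF this a(2-5)] show ?thesis using TFin by (simp add: efin_def)
  next
    case (TInf g)
    then obtain ds where ds0: "ds 0 = d" and Q: "\<And>i. \<exists>t p. g (2*i) = Tm t \<and> g (2*i+1) = Ac p \<and>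
             t \<ge> time (z @ map g [0..<2*i]) \<and>
             tstep wt e (z @ map g [0..<2*i] @ [Tm t]) (ds i) p (ds (Suc i)) \<and>
             \<not> tfinal wt e (z @ map g [0..<2*i]) (ds i)"
      using a(1) by (auto simp: tptr_def)
    have inv: "ztr (z @ map g [0..<2*i]) \<and> pairseq (map g [0..<2*i]) \<and> esgp (ds i)" for i
    proof (induction i)
      case 0 then show ?case using a ds0 by simp
    next
      case (Suc i)
      obtain t p where q: "g (2*i) = Tm t" "g (2*i+1) = Ac p" "t \<ge> time (z @ map g [0..<2*i])"
        "tstep wt e (z @ map g [0..<2*i] @ [Tm t]) (ds i) p (ds (Suc i))" using Q[of i] by blast
      have m: "map g [0..<2*Suc i] = map g [0..<2*i] @ [Tm t, Ac p]" using q by simp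
      have ps: "pairseq (z @ map g [0..<2*i])" using Suc a pairseq_append by simp
      have "ztr ((z @ map g [0..<2*i]) @ [Tm t, Ac p])" using ztr_snoc(2)[OF _ ps q(3)] Suc by simp
      moreover have "pairseq (map g [0..<2*i] @ [Tm t, Ac p])" using Suc pairseq_append by simp
      moreover have "esgp (ds (Suc i))" using tstep_esgp[OF q(4)] Suc by simp
      ultimately show ?case using m by simp
    qed
    have gd: "good z \<tau>"
    proof -
      have "ztr (z @ map g [0..<n]) \<and> pairseq (map g [0..<n])" if "even n" for n
        using inv[of "n div 2"] that by simp
      then show ?thesis using TInf by simp
    qed
    let ?f = "\<lambda>i. aof (g (2*i+1))"
    have "estep w e (acts z @ map ?f [0..<i]) (ds i) (?f i) (ds (Suc i)) \<and>
          \<not> efinal w e (acts z @ map ?f [0..<i]) (ds i)" for i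
    proof -
      obtain t p where q: "g (2*i) = Tm t" "g (2*i+1) = Ac p" "t \<ge> time (z @ map g [0..<2*i])"
        "tstep wt e (z @ map g [0..<2*i] @ [Tm t]) (ds i) p (ds (Suc i))"
        "\<not> tfinal wt e (z @ map g [0..<2*i]) (ds i)" using Q[of i] by blast
      have iv: "ztr (z @ map g [0..<2*i])" "pairseq (map g [0..<2*i])" "esgp (ds i)" using inv[of i] by auto
      have ps: "pairseq (z @ map g [0..<2*i])" using iv a pairseq_append by simp
      have ac: "acts (map g [0..<2*i]) = map ?f [0..<i]" using acts_map_pref[OF iv(2)] .
      have zt: "ztr ((z @ map g [0..<2*i]) @ [Tm t])" using ztr_snoc(1)[OF iv(1) ps q(3)] .
      have "estep w e (acts ((z @ map g [0..<2*i]) @ [Tm t])) (ds i) p (ds (Suc i))"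
        using step_t2e[OF _ iv(3) a(3) zt] q(4) by simp
      moreover have "\<not> efinal w e (acts (z @ map g [0..<2*i])) (ds i)"
        using final_eq[OF iv(3) a(3) iv(1)] q(5) by simp
      ultimately show ?thesis using ac q(2) by simp
    qed
    then have "symt \<tau> \<in> eptr w e (acts z) d" using TInf ds0 by (auto simp: eptr_def)
    then show ?thesis using gd by simp
  qed
qed

lemma lift_map: "map (\<lambda>n. if even n then Tm T else Ac (f (n div 2))) [0..<2*i] = lift T (map f [0..<i])"
proof (induction i)
  case 0 then show ?case by (simp add: lift_def)
next
  case (Suc i)
  have "[0..<2*Suc i] = [0..<2*i] @ [2*i, 2*i+1]" by simp
  then show ?case using Suc by (simp add: lift_snoc)
qed

lemma ptr_e2t: "\<sigma> \<in> eptr w e (acts z) d \<Longrightarrow> esgp d \<Longrightarrow> wse e \<Longrightarrow> ztr z \<Longrightarrow> pairseq z \<Longrightarrow>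
   \<exists>\<tau> \<in> tptr wt e z d. symt \<tau> = \<sigma>"
proof -
  assume a: "\<sigma> \<in> eptr w e (acts z) d" "esgp d" "wse e" "ztr z" "pairseq z"
  show ?thesis
  proof (cases \<sigma>)
    case (TFin u)
    then have "u \<in> efin w e (acts z) d" using a(1) by (simp add: efin_def)
    from fin_e2t[OF this a(2-5)] have "TFin (lift (time z) u) \<in> tptr wt e z d" by (simp add: tfin_def)
    then show ?thesis using TFin by force
  next
    case (TInf f)
    then obtain ds where ds0: "ds 0 = d" and Q: "\<And>i. estep w e (acts z @ map f [0..<i]) (ds i) (f i) (ds (Suc i)) \<and>
             \<not> efinal w e (acts z @ map f [0..<i]) (ds i)"
      using a(1) by (auto simp: eptr_def)
    have es: "esgp (ds i)" for i
    proof (induction i)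
      case 0 then show ?case using a ds0 by simp
    next
      case (Suc i) then show ?case using estep_esgp Q by blast
    qed
    define T where "T = time z"
    define g where "g = (\<lambda>n. if even n then Tm T else Ac (f (n div 2)))"
    have mg: "map g [0..<2*i] = lift T (map f [0..<i])" for i unfolding g_def by (rule lift_map)
    have "\<exists>t p. g (2*i) = Tm t \<and> g (2*i+1) = Ac p \<and>
             t \<ge> time (z @ map g [0..<2*i]) \<and>
             tstep wt e (z @ map g [0..<2*i] @ [Tm t]) (ds i) p (ds (Suc i)) \<and>
             \<not> tfinal wt e (z @ map g [0..<2*i]) (ds i)" for i
    proof -
      have zl: "ztr (z @ lift T (map f [0..<i]))" "time (z @ lift T (map f [0..<i])) = T"
        using ztr_lift a T_def by auto
      have ps: "pairseq (z @ lift T (map f [0..<i]))" using a pairseq_append by simp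
      have z1: "ztr ((z @ lift T (map f [0..<i])) @ [Tm T])" using ztr_snoc(1)[OF zl(1) ps] zl(2) by simp
      have "tstep wt e ((z @ lift T (map f [0..<i])) @ [Tm T]) (ds i) (f i) (ds (Suc i))"
        using step_e2t[OF _ es a(3) z1] Q[of i] by simp
      moreover have "\<not> tfinal wt e (z @ lift T (map f [0..<i])) (ds i)"
        using final_eq[OF es a(3) zl(1)] Q[of i] by simp
      moreover have "g (2*i) = Tm T" "g (2*i+1) = Ac (f i)" unfolding g_def by auto
      ultimately show ?thesis using zl(2) mg[of i] by (intro exI[of _ T] exI[of _ "f i"]) simp
    qed
    then have "TInf g \<in> tptr wt e z d" using ds0 by (auto simp: tptr_def)
    moreover have "symt (TInf g) = \<sigma>" using TInf by (simp add: g_def)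
    ultimately show ?thesis by blast
  qed
qed

lemma main: "esgf \<phi> \<Longrightarrow> wse e \<Longrightarrow> ztr z \<Longrightarrow> pairseq z \<Longrightarrow> good z \<tau> \<Longrightarrow>
   tsat wt e z \<tau> \<phi> = esat w e (acts z) (symt \<tau>) \<phi>"
proof (induction \<phi> arbitrary: e z \<tau> rule: fml.induct[where ?P2.0 = "\<lambda>_. True"])
  case (FPred p ts)
  then have "p \<noteq> Reset" "p \<noteq> Gd" "list_all trm_esg ts" by auto
  then show ?case using evals_eq[of ts e z] FPred.prems T unfolding time_ext_def by (simp add: evals_eq)
next
  case (FEq t1 t2) then show ?case using eval_eq by simp
next
  case (FAll v a) then show ?case using wse_upd by simp
next
  case (FBox a)
  have ih: "tsat wt e (z@z') (TFin []) a = esat w e (acts z @ acts z') (TFin []) a"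
    if "ztr (z@z')" "pairseq z'" for z'
    using FBox.IH[of e "z@z'" "TFin []"] FBox.prems that pairseq_append by simp
  show ?case
  proof
    assume H: "tsat wt e z \<tau> (FBox a)"
    show "esat w e (acts z) (symt \<tau>) (FBox a)"
    proof (simp, intro allI)
      fix u
      have zl: "ztr (z @ lift (time z) u)" using ztr_lift FBox.prems by auto
      then show "esat w e (acts z @ u) (TFin []) a" using H ih[OF zl] by simp
    qed
  next
    assume H: "esat w e (acts z) (symt \<tau>) (FBox a)"
    then show "tsat wt e z \<tau> (FBox a)" using ih by simp
  qed
next
  case (FAfter d a)
  have ed: "esgp d" and ea: "esgf a" using FAfter.prems by auto
  have ih: "tsat wt e (z@z') (TFin []) a = esat w e (acts z @ acts z') (TFin []) a"
    if "ztr (z@z')" "pairseq z'" for z'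
    using FAfter.IH[of e "z@z'" "TFin []"] ea FAfter.prems that pairseq_append by simp
  show ?case
  proof
    assume H: "tsat wt e z \<tau> (FAfter d a)"
    show "esat w e (acts z) (symt \<tau>) (FAfter d a)"
    proof (simp, intro ballI)
      fix u assume u: "u \<in> efin w e (acts z) d"
      have l: "lift (time z) u \<in> tfin wt e z d" using fin_e2t[OF u ed] FAfter.prems by auto
      have zl: "ztr (z @ lift (time z) u)" using ztr_lift FAfter.prems by auto
      show "esat w e (acts z @ u) (TFin []) a" using H l ih[OF zl] by simp
    qed
  next
    assume H: "esat w e (acts z) (symt \<tau>) (FAfter d a)"
    show "tsat wt e z \<tau> (FAfter d a)"
    proof (simp, intro ballI)
      fix zs assume zs: "zs \<in> tfin wt e z d"
      have h: "acts zs \<in> efin w e (acts z) d" "ztr (z@zs)" "pairseq zs"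
        using fin_t2e[OF zs ed] FAfter.prems by auto
      show "tsat wt e (z @ zs) (TFin []) a" using H h ih[OF h(2,3)] by simp
    qed
  qed
next
  case (FEvery d a)
  have ed: "esgp d" and ea: "esgf a" using FEvery.prems by auto
  show ?case
  proof
    assume H: "tsat wt e z \<tau> (FEvery d a)"
    show "esat w e (acts z) (symt \<tau>) (FEvery d a)"
    proof (simp, intro ballI)
      fix \<sigma> assume s: "\<sigma> \<in> eptr w e (acts z) d"
      obtain \<tau>' where t: "\<tau>' \<in> tptr wt e z d" "symt \<tau>' = \<sigma>" using ptr_e2t[OF s ed] FEvery.prems by auto
      have g: "good z \<tau>'" using ptr_t2e[OF t(1) ed] FEvery.prems by auto
      show "esat w e (acts z) \<sigma> a" using H t FEvery.IH[OF ea _ _ _ g] FEvery.prems by auto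
    qed
  next
    assume H: "esat w e (acts z) (symt \<tau>) (FEvery d a)"
    show "tsat wt e z \<tau> (FEvery d a)"
    proof (simp, intro ballI)
      fix \<tau>' assume t: "\<tau>' \<in> tptr wt e z d"
      have g: "good z \<tau>'" "symt \<tau>' \<in> eptr w e (acts z) d" using ptr_t2e[OF t ed] FEvery.prems by auto
      show "tsat wt e z \<tau>' a" using H g FEvery.IH[OF ea _ _ _ g(1)] FEvery.prems by auto
    qed
  qed
next
  case (FEveryFin d a)
  have ed: "esgp d" and ea: "esgf a" using FEveryFin.prems by auto
  show ?case
  proof
    assume H: "tsat wt e z \<tau> (FEveryFin d a)"
    show "esat w e (acts z) (symt \<tau>) (FEveryFin d a)"
    proof (simp, intro ballI)
      fix u assume u: "u \<in> efin w e (acts z) d"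
      have l: "lift (time z) u \<in> tfin wt e z d" using fin_e2t[OF u ed] FEveryFin.prems by auto
      have zl: "ztr (z @ lift (time z) u)" using ztr_lift FEveryFin.prems by auto
      have g: "good z (TFin (lift (time z) u))" using zl by simp
      show "esat w e (acts z) (TFin u) a" using H l FEveryFin.IH[OF ea _ _ _ g] FEveryFin.prems by auto
    qed
  next
    assume H: "esat w e (acts z) (symt \<tau>) (FEveryFin d a)"
    show "tsat wt e z \<tau> (FEveryFin d a)"
    proof (simp, intro ballI)
      fix zs assume zs: "zs \<in> tfin wt e z d"
      have h: "acts zs \<in> efin w e (acts z) d" "ztr (z@zs)" "pairseq zs"
        using fin_t2e[OF zs ed] FEveryFin.prems by auto
      have g: "good z (TFin zs)" using h by simp
      show "tsat wt e z (TFin zs) a" using H h FEveryFin.IH[OF ea _ _ _ g] FEveryFin.prems by auto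
    qed
  qed
next
  case (FUntil a I b)
  have zi: "zero_inf I" and ea: "esgf a" and eb: "esgf b" using FUntil.prems by auto
  note pr = FUntil.prems
  show ?case
  proof
    assume "tsat wt e z \<tau> (FUntil a I b)"
    then obtain z1 \<tau>' where sp: "tsplit \<tau> z1 \<tau>'" and ps1: "pairseq z1" and ne: "z1 \<noteq> []"
      and B: "tsat wt e (z@z1) \<tau>' b"
      and A: "\<forall>z2 z3. z1 = z2@z3 \<and> pairseq z2 \<and> z2 \<noteq> [] \<and> pairseq z3 \<and> z3 \<noteq> [] \<longrightarrow>
                tsat wt e (z@z2) (tprepend z3 \<tau>') a" by auto
    have gp: "ztr (z@z1)" "good (z@z1) \<tau>'" using good_prepend[OF ps1] pr sp by (auto simp: tsplit_def)
    have pz1: "pairseq (z@z1)" using pr ps1 pairseq_append by simp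
    have st: "symt \<tau> = tprepend (acts z1) (symt \<tau>')" using sp symt_prepend[OF ps1] by (simp add: tsplit_def)
    have B': "esat w e (acts z @ acts z1) (symt \<tau>') b"
      using FUntil.IH(2)[OF eb pr(2) gp(1) pz1 gp(2)] B by simp
    have A': "\<forall>u2 u3. acts z1 = u2 @ u3 \<and> u2 \<noteq> [] \<and> u3 \<noteq> [] \<longrightarrow>
                esat w e (acts z @ u2) (tprepend u3 (symt \<tau>')) a"
    proof (intro allI impI)
      fix u2 u3 assume h: "acts z1 = u2 @ u3 \<and> u2 \<noteq> [] \<and> u3 \<noteq> []"
      define z2 where "z2 = take (2*length u2) z1"
      define z3 where "z3 = drop (2*length u2) z1"
      have p2: "pairseq z2" and p3: "pairseq z3" using take_pairseq[OF ps1, of "2*length u2"] z2_def z3_def by auto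
      have a2: "acts z2 = u2" using acts_take[OF ps1, of "length u2"] h z2_def by simp
      have zz: "z1 = z2 @ z3" using z2_def z3_def by simp
      have a3: "acts z3 = u3" using h a2 zz by simp
      have n2: "z2 \<noteq> []" using a2 h acts_nil[OF p2] by auto
      have n3: "z3 \<noteq> []" using a3 h acts_nil[OF p3] by auto
      have Tz: "tsat wt e (z@z2) (tprepend z3 \<tau>') a" using A zz p2 p3 n2 n3 by blast
      have g2: "good (z@z2) (tprepend z3 \<tau>')" using good_prepend[OF p3] gp zz by simp
      have "ztr ((z@z2)@z3)" using gp zz by simp
      then have zt2: "ztr (z@z2)" by (rule ztr_prefix)
      have pz2: "pairseq (z@z2)" using pr p2 pairseq_append by simp
      show "esat w e (acts z @ u2) (tprepend u3 (symt \<tau>')) a"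
        using FUntil.IH(1)[OF ea pr(2) zt2 pz2 g2] Tz symt_prepend[OF p3] a2 a3 by simp
    qed
    have "tsplit (symt \<tau>) (acts z1) (symt \<tau>')" using st by (simp add: tsplit_def)
    moreover have "acts z1 \<noteq> []" using ne acts_nil[OF ps1] by simp
    ultimately show "esat w e (acts z) (symt \<tau>) (FUntil a I b)" using B' A' by auto
  next
    assume "esat w e (acts z) (symt \<tau>) (FUntil a I b)"
    then obtain u \<sigma>' where sp: "tsplit (symt \<tau>) u \<sigma>'" and ne: "u \<noteq> []"
      and B: "esat w e (acts z @ u) \<sigma>' b"
      and A: "\<forall>u2 u3. u = u2 @ u3 \<and> u2 \<noteq> [] \<and> u3 \<noteq> [] \<longrightarrow>
                esat w e (acts z @ u2) (tprepend u3 \<sigma>') a" by auto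
    obtain z1 \<tau>' where sp1: "tsplit \<tau> z1 \<tau>'" and ps1: "pairseq z1" and az: "acts z1 = u"
      using sym_split[OF pr(5) sp] by blast
    have st: "symt \<tau> = tprepend (acts z1) (symt \<tau>')" using sp1 symt_prepend[OF ps1] by (simp add: tsplit_def)
    have ss: "symt \<tau>' = \<sigma>'" using st sp az tprepend_inj by (simp add: tsplit_def)
    have gp: "ztr (z@z1)" "good (z@z1) \<tau>'" using good_prepend[OF ps1] pr sp1 by (auto simp: tsplit_def)
    have pz1: "pairseq (z@z1)" using pr ps1 pairseq_append by simp
    have ne1: "z1 \<noteq> []" using ne az by auto
    have B': "tsat wt e (z@z1) \<tau>' b"
      using FUntil.IH(2)[OF eb pr(2) gp(1) pz1 gp(2)] B az ss by simp
    have I: "inI (time z1 - time z) I"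
    proof -
      obtain bb where "I = Intv 0 True None bb" using zi by (auto simp: zero_inf_def)
      moreover have "time z \<le> time z1" using time_mono[OF gp(1) pr(4) ps1 ne1] .
      ultimately show ?thesis by simp
    qed
    have A': "\<forall>z2 z3. z1 = z2@z3 \<and> pairseq z2 \<and> z2 \<noteq> [] \<and> pairseq z3 \<and> z3 \<noteq> [] \<longrightarrow>
                tsat wt e (z@z2) (tprepend z3 \<tau>') a"
    proof (intro allI impI)
      fix z2 z3 assume h: "z1 = z2@z3 \<and> pairseq z2 \<and> z2 \<noteq> [] \<and> pairseq z3 \<and> z3 \<noteq> []"
      then have p2: "pairseq z2" and p3: "pairseq z3" and zz: "z1 = z2 @ z3" by auto
      have n2: "acts z2 \<noteq> []" using h acts_nil[OF p2] by auto
      have n3: "acts z3 \<noteq> []" using h acts_nil[OF p3] by auto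
      have E: "esat w e (acts z @ acts z2) (tprepend (acts z3) \<sigma>') a" using A az zz n2 n3 by auto
      have g2: "good (z@z2) (tprepend z3 \<tau>')" using good_prepend[OF p3] gp zz by simp
      have "ztr ((z@z2)@z3)" using gp zz by simp
      then have zt2: "ztr (z@z2)" by (rule ztr_prefix)
      have pz2: "pairseq (z@z2)" using pr p2 pairseq_append by simp
      show "tsat wt e (z@z2) (tprepend z3 \<tau>') a"
        using FUntil.IH(1)[OF ea pr(2) zt2 pz2 g2] E symt_prepend[OF p3] ss by simp
    qed
    show "tsat wt e z \<tau> (FUntil a I b)"
      using sp1 ps1 ne1 B' I A' by (simp only: tsat.simps) blast
  qed
qed auto

end


theorem mainTheorem3:
  assumes "is_esg_world w"
      and "time_ext w wt"
      and "esg_sentence \<alpha>"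
      and "ztr zt" and "pairseq zt"
  shows "esg_models w (symtr zt) \<alpha> \<longleftrightarrow> tesg_models wt zt \<alpha>"
proof -
  have "esgf \<alpha>" using assms(3) by (simp add: esg_sentence_def)
  moreover have "good zt (TFin [])" using assms(4) by simp
  ultimately have "tsat wt env0 zt (TFin []) \<alpha> = esat w env0 (acts zt) (symt (TFin [])) \<alpha>"
    using main[OF assms(1,2) _ wse_env0 assms(4,5)] by blast
  then show ?thesis by (simp add: esg_models_def tesg_models_def)
qed

end
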